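(* Let $m\ge1$, let $\phi$ be the unique real root in $(1,2]$ of $\rho^m-\rho^{m-1}-1$, and set $p^-=\frac{\phi-1}{1+m(\phi-1)}$, $p^\bigstar=(m-1)p^-$, $p^+=1-mp^-$. For $\mathbf s\in\{+,-,\bigstar\}^n$ and $x\in\{+,-,\bigstar\}$ let $P^{(x)}_{\mathbf s}=\#\{k: s_k=x\}/n$. Then for every $\epsilon\in(0,1)$, $$\lim_{n\to\infty}\frac{\bigl|\{\mathbf s\in\mathcal S_n:\ |P^{(-)}_{\mathbf s}-p^-|\le\epsilon,\ |P^{(+)}_{\mathbf s}-p^+|\le\epsilon,\ |P^{(\bigstar)}_{\mathbf s}-p^\bigstar|\le\epsilon\}\bigr|}{N(n)}=1 .$$
   Context: Fix an integer $m\ge1$. Define integers $N(n)$ by $N(n)=1$ for $1-m\le n\le 0$ and $N(n)=N(n-1)+N(n-m)$ for $n\ge1$; write $\mathbb N_n=\{1,\dots,N(n)\}$ (so $\mathbb N_n=\{1\}$ for $n\le 0$, and $\mathbb N_{n-m}\subseteq\mathbb N_{n-1}$). Define vectors $\mathbf s_n^{(i)}\in\{+,-,\bigstar\}^n$ for $n\ge0$, $i\in\mathbb N_n$, recursively: $\mathbf s_0^{(1)}$ is the empty vector, and for $n\ge1$: $\mathbf s_n^{(j)}=(\mathbf s_{n-1}^{(j)},+)$ and $\mathbf s_n^{(j+N(n-1))}=(\mathbf s_{n-1}^{(j)},-)$ for $j\in\mathbb N_{n-m}$, while $\mathbf s_n^{(j)}=(\mathbf s_{n-1}^{(j)},\bigstar)$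 for $j\in\mathbb N_{n-1}\setminus\mathbb N_{n-m}$. Let $\mathcal S_n=\{\mathbf s_n^{(i)}:i\in\mathbb N_n\}$ for $n\ge1$. *)

theory Defs
  imports "HOL-Analysis.Analysis"
begin

datatype sgn = Plus | Minus | Star

text \<open>N m n for n \<ge> 0 (for m \<ge> 1, n-(m-1) = n+1-m); values at n \<le> 0 are 1.\<close>
fun NN :: "nat \<Rightarrow> nat \<Rightarrow> nat" where
  "NN m 0 = 1"
| "NN m (Suc n) = NN m n + (if Suc n \<le> m then 1 else NN m (n - (m - 1)))"

definition Nz :: "nat \<Rightarrow> int \<Rightarrow> nat" where
  "Nz m k = (if k \<le> 0 then 1 else NN m (nat k))"

text \<open>svec m n i = s_n^(i), as a list of length n (component k is element k-1).\<close>
fun svec :: "nat \<Rightarrow> nat \<Rightarrow> nat \<Rightarrow> sgn list" where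
  "svec m 0 i = []"
| "svec m (Suc n) i =
     (if i \<le> Nz m (int (Suc n) - int m) then svec m n i @ [Plus]
      else if i \<le> NN m n then svec m n i @ [Star]
      else svec m n (i - NN m n) @ [Minus])"

definition SS :: "nat \<Rightarrow> nat \<Rightarrow> sgn list set" where
  "SS m n = svec m n ` {1..NN m n}"

definition freq :: "sgn list \<Rightarrow> sgn \<Rightarrow> real" where
  "freq s x = real (length (filter (\<lambda>y. y = x) s)) / real (length s)"

definition phi :: "nat \<Rightarrow> real" where
  "phi m = (THE r. 1 < r \<and> r \<le> 2 \<and> r ^ m - r ^ (m - 1) - 1 = 0)"

definition pminus :: "nat \<Rightarrow> real" where
  "pminus m = (phi m - 1) / (1 + real m * (phi m - 1))"

definition pstar :: "nat \<Rightarrow> real" where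
  "pstar m = (real m - 1) * pminus m"

definition pplus :: "nat \<Rightarrow> real" where
  "pplus m = 1 - real m * pminus m"

end

theory Submission imports Defs begin


definition cnt :: "sgn \<Rightarrow> sgn list \<Rightarrow> nat" where
  "cnt x s = length (filter (\<lambda>y. y = x) s)"

lemma cnt_append[simp]: "cnt x (s @ t) = cnt x s + cnt x t"
  by (simp add: cnt_def)
lemma cnt_Nil[simp]: "cnt x [] = 0" by (simp add: cnt_def)
lemma cnt_single[simp]: "cnt x [y] = (if y = x then 1 else 0)" by (simp add: cnt_def)

lemma NN_pos: "NN m n \<ge> 1"
  by (induction n) auto

lemma NN_mono_Suc: "NN m n \<le> NN m (Suc n)"
  by simp

lemma NN_mono: "k \<le> l \<Longrightarrow> NN m k \<le> NN m l"
  by (rule lift_Suc_mono_le[of "NN m"]) (auto intro: NN_mono_Suc)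

lemma Nz_mono: "k \<le> l \<Longrightarrow> Nz m k \<le> Nz m l"
  unfolding Nz_def using NN_pos NN_mono by (auto simp: nat_mono)

lemma Nz_le: "k \<le> int n \<Longrightarrow> Nz m k \<le> NN m n"
  unfolding Nz_def using NN_pos NN_mono by auto

lemma Nz_nonpos: "k \<le> 0 \<Longrightarrow> Nz m k = 1" by (simp add: Nz_def)

lemma nat_aux: "nat (int (Suc n) - int m) = Suc n - m" by simp

lemma NN_Suc': assumes "m \<ge> 1"
  shows "NN m (Suc n) = NN m n + Nz m (int (Suc n) - int m)"
  using assms unfolding Nz_def nat_aux by auto

lemma Nz_le_NN: "m \<ge> 1 \<Longrightarrow> Nz m (int (Suc n) - int m) \<le> NN m n"
  by (rule Nz_le) simp

lemma length_svec[simp]: "length (svec m n i) = n"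
  by (induction n arbitrary: i) auto

lemma cnt_minus_stable:
  assumes "i \<le> NN m k" "k \<le> l"
  shows "cnt Minus (svec m l i) = cnt Minus (svec m k i)"
  using assms(2)
proof (induction l rule: dec_induct)
  case base then show ?case by simp
next
  case (step l)
  have "i \<le> NN m l" using assms(1) NN_mono[of k l m] step(1) by simp
  then show ?case using step by auto
qed

lemma svec_inj: assumes m1: "m \<ge> 1" shows "inj_on (svec m n) {1..NN m n}"
proof (induction n)
  case 0 then show ?case by simp
next
  case (Suc n)
  show ?case
  proof (rule inj_onI)
    fix i j assume i: "i \<in> {1..NN m (Suc n)}" and j: "j \<in> {1..NN m (Suc n)}"
      and eq: "svec m (Suc n) i = svec m (Suc n) j"
    have Z: "Nz m (int (Suc n) - int m) \<le> NN m n" by (rule Nz_le_NN[OF m1])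
    have NS: "NN m (Suc n) \<le> NN m n + Nz m (int (Suc n) - int m)"
      using NN_Suc'[OF m1] by simp
    show "i = j"
    proof (cases "i \<le> NN m n")
      case True
      then have ii: "svec m (Suc n) i = svec m n i @ [if i \<le> Nz m (int (Suc n) - int m) then Plus else Star]"
        by auto
      show ?thesis
      proof (cases "j \<le> NN m n")
        case True
        then have "svec m (Suc n) j = svec m n j @ [if j \<le> Nz m (int (Suc n) - int m) then Plus else Star]"
          by auto
        with ii eq have "svec m n i = svec m n j" by auto
        then show ?thesis using Suc.IH i j \<open>i \<le> NN m n\<close> True by (auto dest: inj_onD)
      next
        case False
        then have "svec m (Suc n) j = svec m n (j - NN m n) @ [Minus]" using Z by (auto simp del: svec.simps simp add: svec.simps(2)[of m n])
        with ii eq show ?thesis by (auto split: if_splits)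
      qed
    next
      case False
      then have ii: "svec m (Suc n) i = svec m n (i - NN m n) @ [Minus]" using Z by (auto simp del: svec.simps simp add: svec.simps(2)[of m n])
      show ?thesis
      proof (cases "j \<le> NN m n")
        case True
        then have "svec m (Suc n) j = svec m n j @ [if j \<le> Nz m (int (Suc n) - int m) then Plus else Star]"
          by auto
        with ii eq show ?thesis by (auto split: if_splits)
      next
        case F2: False
        then have "svec m (Suc n) j = svec m n (j - NN m n) @ [Minus]" using Z by (auto simp del: svec.simps simp add: svec.simps(2)[of m n])
        with ii eq have "svec m n (i - NN m n) = svec m n (j - NN m n)" by auto
        moreover have "i - NN m n \<in> {1..NN m n}" "j - NN m n \<in> {1..NN m n}"
          using False F2 i j NS Z by auto
        ultimately have "i - NN m n = j - NN m n" using Suc.IH by (auto dest: inj_onD)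
        then show ?thesis using False F2 by simp
      qed
    qed
  qed
qed

definition Wt :: "nat \<Rightarrow> real \<Rightarrow> nat \<Rightarrow> real" where
  "Wt m t n = (\<Sum>i\<in>{1..NN m n}. t ^ cnt Minus (svec m n i))"

lemma Wt_Suc:
  assumes m1: "m \<ge> 1"
  shows "Wt m t (Suc n) = Wt m t n + t * (if Suc n \<le> m then 1 else Wt m t (Suc n - m))"
proof -
  define Z where "Z = Nz m (int (Suc n) - int m)"
  define N where "N = NN m n"
  have ZN: "Z \<le> N" unfolding Z_def N_def by (rule Nz_le_NN[OF m1])
  have NS: "NN m (Suc n) = N + Z" unfolding N_def Z_def by (rule NN_Suc'[OF m1])
  have N1: "1 \<le> N" unfolding N_def by (rule NN_pos)
  define f where "f i = t ^ cnt Minus (svec m (Suc n) i)" for i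
  have "Wt m t (Suc n) = sum f {1..N + Z}" unfolding Wt_def NS f_def ..
  also have "\<dots> = sum f {1..N} + sum f {N+1..N+Z}"
    by (rule sum.ub_add_nat) simp
  also have "sum f {1..N} = Wt m t n"
    unfolding Wt_def N_def[symmetric]
  proof (rule sum.cong)
    fix i assume "i \<in> {1..N}"
    then have "i \<le> NN m n" by (simp add: N_def)
    then show "f i = t ^ cnt Minus (svec m n i)" unfolding f_def by auto
  qed simp
  also have "sum f {N+1..N+Z} = sum (\<lambda>j. f (j + N)) {1..Z}"
    using sum.shift_bounds_cl_nat_ivl[of f 1 N Z] by (simp add: add.commute)
  also have "\<dots> = (\<Sum>j\<in>{1..Z}. t * t ^ cnt Minus (svec m n j))"
  proof (rule sum.cong)
    fix j assume j: "j \<in> {1..Z}"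
    have "svec m (Suc n) (j + N) = svec m n j @ [Minus]"
      using j ZN N1 by (auto simp: Z_def N_def)
    then show "f (j + N) = t * t ^ cnt Minus (svec m n j)" unfolding f_def by simp
  qed simp
  also have "\<dots> = t * (\<Sum>j\<in>{1..Z}. t ^ cnt Minus (svec m n j))"
    by (simp add: sum_distrib_left)
  also have "(\<Sum>j\<in>{1..Z}. t ^ cnt Minus (svec m n j)) = (if Suc n \<le> m then 1 else Wt m t (Suc n - m))"
  proof (cases "Suc n \<le> m")
    case True
    then have "Z = 1" unfolding Z_def by (simp add: Nz_def)
    moreover have "cnt Minus (svec m n 1) = cnt Minus (svec m 0 1)"
      by (rule cnt_minus_stable) auto
    ultimately show ?thesis using True by simp
  next
    case False
    then have Z2: "Z = NN m (Suc n - m)" unfolding Z_def Nz_def nat_aux by simp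
    have "(\<Sum>j\<in>{1..Z}. t ^ cnt Minus (svec m n j)) = (\<Sum>j\<in>{1..Z}. t ^ cnt Minus (svec m (Suc n - m) j))"
    proof (rule sum.cong)
      fix j assume "j \<in> {1..Z}"
      then have "j \<le> NN m (Suc n - m)" by (simp add: Z2)
      then show "t ^ cnt Minus (svec m n j) = t ^ cnt Minus (svec m (Suc n - m) j)"
        using cnt_minus_stable[of j m "Suc n - m" n] m1 by simp
    qed simp
    then show ?thesis unfolding Wt_def Z2[symmetric] using False by simp
  qed
  finally show ?thesis .
qed

lemma Wt_bound:
  assumes m1: "m \<ge> 1" and t: "t > 0" and x: "x > 0" and ineq: "x ^ (m - 1) + t \<le> x ^ m"
  shows "Wt m t n \<le> max 1 (t / (x - 1)) * x ^ n"
proof -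
  have xm: "x ^ m = x ^ (m - 1) * x" using m1
    by (metis Suc_diff_le diff_Suc_1 mult.commute power_Suc)
  have "x ^ (m - 1) * (x - 1) \<ge> t" using ineq xm by (simp add: algebra_simps)
  then have "x ^ (m - 1) * (x - 1) > 0" using t by linarith
  then have x1: "x > 1" using x by (simp add: zero_less_mult_iff)
  define C where "C = max 1 (t / (x - 1))"
  have C1: "C \<ge> 1" and Ct: "C * (x - 1) \<ge> t" using x1
    by (auto simp: C_def field_simps max_def)
  show ?thesis unfolding C_def[symmetric]
  proof (induction n rule: less_induct)
    case (less n)
    show ?case
    proof (cases n)
      case 0 then show ?thesis using C1 by (simp add: Wt_def)
    next
      case (Suc k)
      have IHk: "Wt m t k \<le> C * x ^ k" using less Suc by simp
      have xk: "x ^ k \<ge> 1" using x1 by simp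
      show ?thesis
      proof (cases "Suc k \<le> m")
        case True
        have "Wt m t n = Wt m t k + t" using Wt_Suc[OF m1, of t k] True Suc by simp
        also have "\<dots> \<le> C * x ^ k + C * (x - 1) * x ^ k"
          proof -
          have a: "t \<le> t * x ^ k" using mult_left_mono[OF xk, of t] t by simp
          have b: "t * x ^ k \<le> C * (x - 1) * x ^ k" using mult_right_mono[OF Ct, of "x ^ k"] x by simp
          show ?thesis using a b IHk by linarith
        qed
        also have "\<dots> = C * x ^ n" using Suc by (simp add: algebra_simps)
        finally show ?thesis .
      next
        case False
        define j where "j = Suc k - m"
        have kj: "k = j + (m - 1)" "n = j + m" using False Suc m1 by (auto simp: j_def)
        have IHj: "Wt m t j \<le> C * x ^ j" using less kj m1 by simp
        have "Wt m t n = Wt m t k + t * Wt m t j" using Wt_Suc[OF m1, of t k] False Suc by (simp add: j_def)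
        also have "\<dots> \<le> C * x ^ k + t * (C * x ^ j)"
          using IHk IHj t by (smt (verit) mult_left_mono)
        also have "\<dots> = C * x ^ j * (x ^ (m - 1) + t)" using kj by (simp add: power_add algebra_simps)
        also have "\<dots> \<le> C * x ^ j * x ^ m"
          using ineq C1 x by (intro mult_left_mono) auto
        also have "\<dots> = C * x ^ n" using kj by (simp add: power_add)
        finally show ?thesis .
      qed
    qed
  qed
qed

definition Aset :: "nat \<Rightarrow> nat \<Rightarrow> nat \<Rightarrow> nat set" where
  "Aset m n i = {j\<in>{1..<m}. Nz m (int n + int j - int m) < i}"

lemma Nz_int: "Nz m (int n) = NN m n"
  unfolding Nz_def by (cases "n = 0") (simp_all del: NN.simps(2))

lemma Aset_empty:
  assumes "i \<le> Nz m (int (Suc n) - int m)"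
  shows "Aset m n i = {}"
proof -
  have "\<not> Nz m (int n + int j - int m) < i" if "j \<ge> 1" for j
    using Nz_mono[of "int (Suc n) - int m" "int n + int j - int m" m] that assms by simp
  then show ?thesis unfolding Aset_def by auto
qed

lemma star_inv:
  assumes m1: "m \<ge> 1"
  shows "1 \<le> i \<Longrightarrow> i \<le> NN m n \<Longrightarrow>
    int ((m - 1) * cnt Minus (svec m n i)) - int (cnt Star (svec m n i)) = int (card (Aset m n i))"
proof (induction n arbitrary: i)
  case 0
  then have "i = 1" by simp
  moreover have "Aset m 0 1 = {}" unfolding Aset_def by (auto simp: Nz_def)
  ultimately show ?case by simp
next
  case (Suc n)
  define Z where "Z = Nz m (int (Suc n) - int m)"
  have ZN: "Z \<le> NN m n" unfolding Z_def by (rule Nz_le_NN[OF m1])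
  have NS: "NN m (Suc n) = NN m n + Z" unfolding Z_def by (rule NN_Suc'[OF m1])
  show ?case
  proof (cases "i \<le> Z")
    case True
    then have sv: "svec m (Suc n) i = svec m n i @ [Plus]" using ZN by (simp add: Z_def)
    have "Aset m n i = {}" using True Aset_empty unfolding Z_def by blast
    moreover have "Aset m (Suc n) i = {}"
      using True Aset_empty[of i m "Suc n"] Nz_mono[of "int (Suc n) - int m" "int (Suc (Suc n)) - int m" m]
      unfolding Z_def by simp
    ultimately show ?thesis using Suc.IH[of i] Suc.prems True ZN sv by simp
  next
    case F1: False
    show ?thesis
    proof (cases "i \<le> NN m n")
      case True
      then have sv: "svec m (Suc n) i = svec m n i @ [Star]" using F1 by (simp add: Z_def)
      have m2: "m \<ge> 2"
      proof (rule ccontr)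
        assume "\<not> m \<ge> 2"
        then have "m = 1" using m1 by simp
        then have "Z = NN m n" unfolding Z_def by (simp add: Nz_def)
        then show False using F1 True by simp
      qed
      have eq: "Aset m n i = insert 1 (Suc ` Aset m (Suc n) i)"
      proof (rule set_eqI, rule iffI)
        fix j assume j: "j \<in> Aset m n i"
        show "j \<in> insert 1 (Suc ` Aset m (Suc n) i)"
        proof (cases "j = 1")
          case True then show ?thesis by simp
        next
          case False
          then obtain j' where j': "j = Suc j'" "j' \<ge> 1" using j unfolding Aset_def
            by (metis One_nat_def atLeastLessThan_iff mem_Collect_eq not0_implies_Suc le_numeral_extra(3) less_one linorder_not_le)
          have eqz: "Nz m (int (Suc n) + int j' - int m) = Nz m (int n + int j - int m)" using j' by (simp add: algebra_simps)
          then have "j' \<in> Aset m (Suc n) i" using j j' unfolding Aset_def by auto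
          then show ?thesis using j' by simp
        qed
      next
        fix j assume j: "j \<in> insert 1 (Suc ` Aset m (Suc n) i)"
        show "j \<in> Aset m n i"
        proof (cases "j = 1")
          case True then show ?thesis using m2 F1 unfolding Aset_def Z_def by (simp add: add.commute)
        next
          case False
          then obtain j' where j': "j = Suc j'" "j' \<in> Aset m (Suc n) i" using j by auto
          have lt: "Nz m (int (Suc n) + int j' - int m) < i" "1 \<le> j'" "j' < m" using j'(2) unfolding Aset_def by auto
          have "Suc j' \<noteq> m"
          proof
            assume "Suc j' = m"
            then have "int (Suc n) + int j' - int m = int n" by simp
            then have "Nz m (int (Suc n) + int j' - int m) = NN m n" by (simp only: Nz_int)
            then show False using lt True by simp
          qed
          moreover have "Nz m (int n + int (Suc j') - int m) = Nz m (int (Suc n) + int j' - int m)"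
            by (simp add: algebra_simps)
          ultimately show ?thesis using lt j' unfolding Aset_def by auto
        qed
      qed
      have fin: "finite (Aset m (Suc n) i)" unfolding Aset_def by simp
      have "1 \<notin> Suc ` Aset m (Suc n) i" unfolding Aset_def by auto
      then have "card (Aset m n i) = Suc (card (Aset m (Suc n) i))"
        unfolding eq using fin by (simp add: card_image)
      moreover have "int (m - 1) = int m - 1" using m1 by simp
      ultimately show ?thesis using Suc.IH[of i] Suc.prems True sv by (simp add: algebra_simps)
    next
      case False
      define i' where "i' = i - NN m n"
      have i': "1 \<le> i'" "i' \<le> Z" using False Suc.prems NS by (auto simp: i'_def)
      have sv: "svec m (Suc n) i = svec m n i' @ [Minus]" using False ZN by (simp add: Z_def i'_def)
      have "Aset m n i' = {}" using i' Aset_empty unfolding Z_def by blast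
      then have D0: "int ((m - 1) * cnt Minus (svec m n i')) - int (cnt Star (svec m n i')) = 0"
        using Suc.IH[of i'] i' ZN by simp
      have "Aset m (Suc n) i = {1..<m}"
      proof -
        have "Nz m (int (Suc n) + int j - int m) < i" if "j < m" for j
          using Nz_le[of "int (Suc n) + int j - int m" n m] that False by simp
        then show ?thesis unfolding Aset_def by auto
      qed
      then show ?thesis using D0 sv by (simp add: algebra_simps of_nat_diff)
    qed
  qed
qed

lemma star_bounds:
  assumes m1: "m \<ge> 1" and i: "1 \<le> i" "i \<le> NN m n"
  shows "real (cnt Star (svec m n i)) \<le> real (m - 1) * real (cnt Minus (svec m n i))"
    "real (m - 1) * real (cnt Minus (svec m n i)) - real (cnt Star (svec m n i)) \<le> real (m - 1)"
proof -
  have "card (Aset m n i) \<le> card {1..<m}"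
    by (rule card_mono) (auto simp: Aset_def)
  then have "card (Aset m n i) \<le> m - 1" by simp
  then have c: "int (card (Aset m n i)) \<le> int (m - 1)" by simp
  have e: "int ((m - 1) * cnt Minus (svec m n i)) - int (cnt Star (svec m n i)) = int (card (Aset m n i))"
    by (rule star_inv[OF m1 i])
  have e': "real (m - 1) * real (cnt Minus (svec m n i)) - real (cnt Star (svec m n i)) = real (card (Aset m n i))"
    using arg_cong[OF e, of real_of_int] by simp
  show "real (cnt Star (svec m n i)) \<le> real (m - 1) * real (cnt Minus (svec m n i))" using e' by simp
  show "real (m - 1) * real (cnt Minus (svec m n i)) - real (cnt Star (svec m n i)) \<le> real (m - 1)"
    using e' c by simp
qed

lemma cnt_total: "cnt Plus s + cnt Minus s + cnt Star s = length s"
proof (induction s)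
  case (Cons a s) then show ?case by (cases a) (auto simp: cnt_def)
qed (simp add: cnt_def)



lemma pow_m: "m \<ge> 1 \<Longrightarrow> (r::real) ^ m = r ^ (m - 1) * r"
  by (metis Suc_diff_le diff_Suc_1 mult.commute power_Suc)

lemma phi_props:
  assumes m1: "m \<ge> 1"
  shows "1 < phi m" "phi m \<le> 2" "phi m ^ (m - 1) * (phi m - 1) = 1"
proof -
  define P where "P r = (1 < r \<and> r \<le> 2 \<and> r ^ m - r ^ (m - 1) - 1 = 0)" for r :: real
  have Pe: "P r \<longleftrightarrow> 1 < r \<and> r \<le> 2 \<and> r ^ (m - 1) * (r - 1) = 1" for r
    unfolding P_def using pow_m[OF m1, of r] by (auto simp: algebra_simps)
  define f where "f r = r ^ m - r ^ (m - 1) - 1" for r :: real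
  have f1: "f 1 \<le> 0" by (simp add: f_def)
  have "(2::real) ^ (m - 1) \<ge> 1" by simp
  then have f2: "0 \<le> f 2" unfolding f_def using pow_m[OF m1, of 2] by simp
  have "\<forall>x. 1 \<le> x \<and> x \<le> 2 \<longrightarrow> isCont f x" unfolding f_def by (auto intro!: continuous_intros)
  from IVT[of f 1 0 2, OF f1 f2 _ this] obtain r where r: "1 \<le> r" "r \<le> 2" "f r = 0" by auto
  have "r \<noteq> 1"
  proof
    assume "r = 1" with r(3) show False by (simp add: f_def)
  qed
  then have Pr: "P r" using r unfolding P_def f_def by auto
  have uniq: "s = r" if "P s" for s
  proof (rule ccontr)
    assume ne: "s \<noteq> r"
    have lt: "u ^ (m - 1) * (u - 1) < v ^ (m - 1) * (v - 1)" if "1 < u" "u < v" for u v :: real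
    proof -
      have "u ^ (m - 1) \<le> v ^ (m - 1)" using that by (intro power_mono) auto
      moreover have "0 < u ^ (m - 1)" using that by simp
      ultimately show ?thesis using that by (intro mult_le_less_imp_less) auto
    qed
    show False using Pe[of s] Pe[of r] that Pr ne lt[of s r] lt[of r s]
      by (cases "s < r") auto
  qed
  have "phi m = r" unfolding phi_def P_def[symmetric] using Pr uniq by (rule the_equality)
  then show "1 < phi m" "phi m \<le> 2" "phi m ^ (m - 1) * (phi m - 1) = 1" using Pr Pe by auto
qed

lemma pminus_pos: "m \<ge> 1 \<Longrightarrow> pminus m > 0"
  using phi_props[of m] unfolding pminus_def by (auto intro!: divide_pos_pos add_pos_nonneg)

lemma deriv_g:
  assumes m1: "m \<ge> 1"
  defines "\<phi> \<equiv> phi m"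
  shows "DERIV (\<lambda>t. (\<phi> * t powr a) ^ (m - 1) * (\<phi> * t powr a - 1) - t) 1 :>
           (\<phi> ^ (m - 1) * a * (1 + real m * (\<phi> - 1)) - 1)"
proof -
  have D: "DERIV (\<lambda>t. (\<phi> * t powr a) ^ (m - 1) * (\<phi> * t powr a - 1) - t) 1 :>
     (real (m - 1) * (\<phi> * 1 powr a) ^ (m - 1 - 1) * (\<phi> * (a * 1 powr (a - 1))) * (\<phi> * 1 powr a - 1)
       + (\<phi> * 1 powr a) ^ (m - 1) * (\<phi> * (a * 1 powr (a - 1))) - 1)"
    by (auto intro!: derivative_eq_intros)
  have e: "real (m - 1) * \<phi> ^ (m - 1 - 1) * \<phi> = real (m - 1) * \<phi> ^ (m - 1)"
  proof (cases "m \<ge> 2")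
    case True
    then have "\<phi> ^ (m - 1) = \<phi> ^ (m - 1 - 1) * \<phi>" by (intro pow_m) auto
    then show ?thesis by simp
  next
    case False then have "m = 1" using m1 by simp
    then show ?thesis by simp
  qed
  have "real (m - 1) * (\<phi> * 1 powr a) ^ (m - 1 - 1) * (\<phi> * (a * 1 powr (a - 1))) * (\<phi> * 1 powr a - 1)
       + (\<phi> * 1 powr a) ^ (m - 1) * (\<phi> * (a * 1 powr (a - 1))) - 1
     = (real (m - 1) * \<phi> ^ (m - 1 - 1) * \<phi>) * a * (\<phi> - 1) + \<phi> ^ (m - 1) * \<phi> * a - 1"
    by (simp add: algebra_simps)
  also have "\<dots> = \<phi> ^ (m - 1) * a * (1 + real m * (\<phi> - 1)) - 1"
    unfolding e using m1 by (simp add: algebra_simps of_nat_diff)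
  finally show ?thesis using D by simp
qed

lemma g1_zero:
  assumes m1: "m \<ge> 1"
  shows "(\<lambda>t. (phi m * t powr a) ^ (m - 1) * (phi m * t powr a - 1) - t) 1 = 0"
  using phi_props(3)[OF m1] by simp

lemma g_pos_imp:
  assumes m1: "m \<ge> 1" and t: "t > 0"
    and g: "0 < (phi m * t powr a) ^ (m - 1) * (phi m * t powr a - 1) - t"
  shows "(phi m * t powr a) ^ (m - 1) + t \<le> (phi m * t powr a) ^ m"
  using g pow_m[OF m1, of "phi m * t powr a"] by (simp add: algebra_simps)

lemma L_sign:
  assumes m1: "m \<ge> 1"
  shows "phi m ^ (m - 1) * a * (1 + real m * (phi m - 1)) - 1 > 0 \<longleftrightarrow> a > pminus m"
proof -
  define \<phi> where "\<phi> = phi m"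
  have p1: "\<phi> > 1" and pe: "\<phi> ^ (m - 1) * (\<phi> - 1) = 1" using phi_props[OF m1] by (auto simp: \<phi>_def)
  define D where "D = 1 + real m * (\<phi> - 1)"
  have D: "D > 0" using p1 by (auto simp: D_def intro: add_pos_nonneg)
  have pp: "\<phi> ^ (m - 1) > 0" using p1 by simp
  have "\<phi> ^ (m - 1) * a * D - 1 > 0 \<longleftrightarrow> \<phi> ^ (m - 1) * (a * D) > \<phi> ^ (m - 1) * (\<phi> - 1)"
    using pe by (simp add: algebra_simps)
  also have "\<dots> \<longleftrightarrow> a * D > \<phi> - 1" using pp by simp
  also have "\<dots> \<longleftrightarrow> a > (\<phi> - 1) / D" using D by (simp add: pos_divide_less_eq)
  finally show ?thesis by (simp add: pminus_def \<phi>_def D_def)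
qed

lemma L_sign_neg:
  assumes m1: "m \<ge> 1"
  shows "phi m ^ (m - 1) * a * (1 + real m * (phi m - 1)) - 1 < 0 \<longleftrightarrow> a < pminus m"
proof -
  define \<phi> where "\<phi> = phi m"
  have p1: "\<phi> > 1" and pe: "\<phi> ^ (m - 1) * (\<phi> - 1) = 1" using phi_props[OF m1] by (auto simp: \<phi>_def)
  define D where "D = 1 + real m * (\<phi> - 1)"
  have D: "D > 0" using p1 by (auto simp: D_def intro: add_pos_nonneg)
  have pp: "\<phi> ^ (m - 1) > 0" using p1 by simp
  have "\<phi> ^ (m - 1) * a * D - 1 < 0 \<longleftrightarrow> \<phi> ^ (m - 1) * (a * D) < \<phi> ^ (m - 1) * (\<phi> - 1)"
    using pe by (simp add: algebra_simps)
  also have "\<dots> \<longleftrightarrow> a * D < \<phi> - 1" using pp by simp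
  also have "\<dots> \<longleftrightarrow> a < (\<phi> - 1) / D" using D by (simp add: pos_less_divide_eq)
  finally show ?thesis by (simp add: pminus_def \<phi>_def D_def)
qed

lemma exists_t_hi:
  assumes m1: "m \<ge> 1" and a: "a > pminus m"
  shows "\<exists>t>1. (phi m * t powr a) ^ (m - 1) + t \<le> (phi m * t powr a) ^ m"
proof -
  from DERIV_pos_inc_right[OF deriv_g[OF m1, of a]] L_sign[OF m1, of a] a
  obtain d where d: "d > 0" "\<And>h. 0 < h \<Longrightarrow> h < d \<Longrightarrow>
      (\<lambda>t. (phi m * t powr a) ^ (m - 1) * (phi m * t powr a - 1) - t) 1 <
      (\<lambda>t. (phi m * t powr a) ^ (m - 1) * (phi m * t powr a - 1) - t) (1 + h)" by blast
  have "0 < (phi m * (1 + d/2) powr a) ^ (m - 1) * (phi m * (1 + d/2) powr a - 1) - (1 + d/2)"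
    using d(2)[of "d/2"] d(1) g1_zero[OF m1, of a] by simp
  from g_pos_imp[OF m1 _ this] d(1) show ?thesis by (intro exI[of _ "1 + d/2"]) auto
qed

lemma exists_t_lo:
  assumes m1: "m \<ge> 1" and a: "a < pminus m"
  shows "\<exists>t. 0 < t \<and> t < 1 \<and> (phi m * t powr a) ^ (m - 1) + t \<le> (phi m * t powr a) ^ m"
proof -
  from DERIV_neg_dec_left[OF deriv_g[OF m1, of a]] L_sign_neg[OF m1, of a] a
  obtain d where d: "d > 0" "\<And>h. 0 < h \<Longrightarrow> h < d \<Longrightarrow>
      (\<lambda>t. (phi m * t powr a) ^ (m - 1) * (phi m * t powr a - 1) - t) 1 <
      (\<lambda>t. (phi m * t powr a) ^ (m - 1) * (phi m * t powr a - 1) - t) (1 - h)" by blast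
  define h where "h = min (d/2) (1/2)"
  have h: "0 < h" "h < d" "h < 1" using d(1) by (auto simp: h_def)
  have "0 < (phi m * (1 - h) powr a) ^ (m - 1) * (phi m * (1 - h) powr a - 1) - (1 - h)"
    using d(2)[of h] h g1_zero[OF m1, of a] by simp
  from g_pos_imp[OF m1 _ this] h show ?thesis by (intro exI[of _ "1 - h"]) auto
qed

lemma chernoff_hi:
  assumes m1: "m \<ge> 1" and t: "t > 1" and x: "x > 0" and ineq: "x ^ (m - 1) + t \<le> x ^ m"
  shows "real (card {i\<in>{1..NN m n}. real (cnt Minus (svec m n i)) \<ge> b}) * t powr b
           \<le> max 1 (t / (x - 1)) * x ^ n"
proof -
  define A where "A = {i\<in>{1..NN m n}. real (cnt Minus (svec m n i)) \<ge> b}"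
  have "real (card A) * t powr b = (\<Sum>i\<in>A. t powr b)" by simp
  also have "\<dots> \<le> (\<Sum>i\<in>A. t ^ cnt Minus (svec m n i))"
  proof (rule sum_mono)
    fix i assume "i \<in> A"
    then have "t powr b \<le> t powr real (cnt Minus (svec m n i))"
      using t unfolding A_def by (intro powr_mono) auto
    then show "t powr b \<le> t ^ cnt Minus (svec m n i)" using t by (simp add: powr_realpow)
  qed
  also have "\<dots> \<le> Wt m t n" unfolding Wt_def A_def
    by (rule sum_mono2) (use t in auto)
  also have "\<dots> \<le> max 1 (t / (x - 1)) * x ^ n" by (rule Wt_bound) (use assms in auto)
  finally show ?thesis unfolding A_def .
qed

lemma chernoff_lo:
  assumes m1: "m \<ge> 1" and t: "0 < t" "t < 1" and x: "x > 0" and ineq: "x ^ (m - 1) + t \<le> x ^ m"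
  shows "real (card {i\<in>{1..NN m n}. real (cnt Minus (svec m n i)) \<le> b}) * t powr b
           \<le> max 1 (t / (x - 1)) * x ^ n"
proof -
  define A where "A = {i\<in>{1..NN m n}. real (cnt Minus (svec m n i)) \<le> b}"
  have "real (card A) * t powr b = (\<Sum>i\<in>A. t powr b)" by simp
  also have "\<dots> \<le> (\<Sum>i\<in>A. t ^ cnt Minus (svec m n i))"
  proof (rule sum_mono)
    fix i assume "i \<in> A"
    then have "t powr b \<le> t powr real (cnt Minus (svec m n i))"
      using t unfolding A_def by (intro powr_mono') auto
    then show "t powr b \<le> t ^ cnt Minus (svec m n i)" using t by (simp add: powr_realpow)
  qed
  also have "\<dots> \<le> Wt m t n" unfolding Wt_def A_def
    by (rule sum_mono2) (use t in auto)
  also have "\<dots> \<le> max 1 (t / (x - 1)) * x ^ n" by (rule Wt_bound) (use assms in auto)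
  finally show ?thesis unfolding A_def .
qed

lemma NN_lower:
  assumes m1: "m \<ge> 1"
  shows "phi m ^ n \<le> real (NN m n) * phi m ^ m"
proof (induction n rule: less_induct)
  case (less n)
  have p1: "(phi m) > 1" and pe: "(phi m) ^ (m - 1) * ((phi m) - 1) = 1" using phi_props[OF m1] by auto
  have pm: "(phi m) ^ m = (phi m) ^ (m - 1) + 1" using pe pow_m[OF m1, of "phi m"] by (simp add: algebra_simps)
  show ?case
  proof (cases n)
    case 0 then show ?thesis using p1 by (simp add: one_le_power)
  next
    case (Suc k)
    have IHk: "(phi m) ^ k \<le> real (NN m k) * (phi m) ^ m" using less Suc by simp
    show ?thesis
    proof (cases "Suc k \<le> m")
      case True
      have NS: "NN m n = NN m k + 1" using NN_Suc'[OF m1, of k] True Suc by (simp add: Nz_def)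
      have "(phi m) ^ k * ((phi m) - 1) \<le> (phi m) ^ k" using p1 phi_props(2)[OF m1] by (simp add: mult_left_le)
      also have "(phi m) ^ k \<le> (phi m) ^ m" using True p1 by (intro power_increasing) auto
      finally have "(phi m) ^ n \<le> (phi m) ^ k + (phi m) ^ m" using Suc by (simp add: algebra_simps)
      then show ?thesis using IHk NS by (simp add: algebra_simps)
    next
      case False
      define j where "j = Suc k - m"
      have kj: "k = j + (m - 1)" "n = j + m" using False Suc m1 by (auto simp: j_def)
      have IHj: "(phi m) ^ j \<le> real (NN m j) * (phi m) ^ m" using less kj m1 by simp
      have NS: "NN m n = NN m k + NN m j"
        using NN_Suc'[OF m1, of k] False Suc unfolding Nz_def nat_aux by (simp add: j_def)
      have "(phi m) ^ n = (phi m) ^ k + (phi m) ^ j" using kj pm by (simp add: power_add algebra_simps)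
      then show ?thesis using IHk IHj NS by (simp add: algebra_simps)
    qed
  qed
qed

lemma tail_generic:
  assumes ch: "k * t powr (b * real n) \<le> C * (phi m * t powr (b + e)) ^ n"
    and m1: "m \<ge> 1" and t: "t > 0" and C: "C \<ge> 0"
  shows "k \<le> (C * phi m ^ m) * (t powr e) ^ n * real (NN m n)"
proof -
  define T where "T = t powr (b * real n)"
  define R where "R = (t powr e) ^ n"
  have T: "T > 0" using t by (simp add: T_def)
  have R: "R \<ge> 0" by (simp add: R_def)
  have "(t powr (b + e)) ^ n = t powr (real n * (b + e))" using t by (simp add: powr_power)
  also have "\<dots> = T * R" using t
    by (simp add: T_def R_def powr_power powr_add[symmetric] algebra_simps)
  finally have xn: "(phi m * t powr (b + e)) ^ n = phi m ^ n * (T * R)" by (simp add: power_mult_distrib)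
  have "k * T \<le> C * (phi m ^ n * (T * R))" using ch xn by (simp add: T_def)
  also have "\<dots> \<le> C * ((real (NN m n) * phi m ^ m) * (T * R))"
    using NN_lower[OF m1, of n] C T R by (intro mult_left_mono mult_right_mono) auto
  finally have "k * T \<le> ((C * phi m ^ m) * R * real (NN m n)) * T" by (simp add: algebra_simps)
  then show ?thesis using T by (simp add: R_def)
qed

lemma tail_hi:
  assumes m1: "m \<ge> 1" and \<delta>: "\<delta> > 0"
  shows "\<exists>K r. 0 \<le> r \<and> r < 1 \<and> (\<forall>n. real (card {i\<in>{1..NN m n}.
      real (cnt Minus (svec m n i)) \<ge> (pminus m + \<delta>) * real n}) \<le> K * r ^ n * real (NN m n))"
proof -
  obtain t where t: "t > 1" and ineq: "(phi m * t powr (pminus m + \<delta> / 2)) ^ (m - 1) + t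
      \<le> (phi m * t powr (pminus m + \<delta> / 2)) ^ m"
    using exists_t_hi[OF m1, of "pminus m + \<delta>/2"] \<delta> by auto
  define x where "x = phi m * t powr (pminus m + \<delta> / 2)"
  have x: "x > 0" using phi_props(1)[OF m1] t by (simp add: x_def)
  define C where "C = max 1 (t / (x - 1))"
  have "(pminus m + \<delta>) + (- \<delta> / 2) = pminus m + \<delta> / 2" by simp
  have "\<forall>n. real (card {i\<in>{1..NN m n}. real (cnt Minus (svec m n i)) \<ge> (pminus m + \<delta>) * real n})
       \<le> (C * phi m ^ m) * (t powr (- \<delta> / 2)) ^ n * real (NN m n)"
  proof
    fix n
    have "real (card {i\<in>{1..NN m n}. real (cnt Minus (svec m n i)) \<ge> (pminus m + \<delta>) * real n})
        * t powr ((pminus m + \<delta>) * real n) \<le> C * (phi m * t powr ((pminus m + \<delta>) + (- \<delta> / 2))) ^ n"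
    proof -
      have e: "(pminus m + \<delta>) + (- \<delta> / 2) = pminus m + \<delta> / 2" by simp
      show ?thesis unfolding e unfolding C_def x_def[symmetric]
        by (rule chernoff_hi[OF m1 t x ineq[folded x_def]])
    qed
    then show "real (card {i\<in>{1..NN m n}. real (cnt Minus (svec m n i)) \<ge> (pminus m + \<delta>) * real n})
       \<le> (C * phi m ^ m) * (t powr (- \<delta> / 2)) ^ n * real (NN m n)"
      by (rule tail_generic) (use t m1 in \<open>auto simp: C_def\<close>)
  qed
  moreover have "t powr (- \<delta> / 2) < 1" using t \<delta> by (intro powr_less_one) auto
  ultimately show ?thesis by (intro exI[of _ "C * phi m ^ m"] exI[of _ "t powr (- \<delta> / 2)"]) auto
qed

lemma tail_lo:
  assumes m1: "m \<ge> 1" and \<delta>: "\<delta> > 0"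
  shows "\<exists>K r. 0 \<le> r \<and> r < 1 \<and> (\<forall>n. real (card {i\<in>{1..NN m n}.
      real (cnt Minus (svec m n i)) \<le> (pminus m - \<delta>) * real n}) \<le> K * r ^ n * real (NN m n))"
proof -
  obtain t where t: "0 < t" "t < 1" and ineq: "(phi m * t powr (pminus m - \<delta> / 2)) ^ (m - 1) + t
      \<le> (phi m * t powr (pminus m - \<delta> / 2)) ^ m"
    using exists_t_lo[OF m1, of "pminus m - \<delta>/2"] \<delta> by auto
  define x where "x = phi m * t powr (pminus m - \<delta> / 2)"
  have x: "x > 0" using phi_props(1)[OF m1] t by (simp add: x_def)
  define C where "C = max 1 (t / (x - 1))"
  have "\<forall>n. real (card {i\<in>{1..NN m n}. real (cnt Minus (svec m n i)) \<le> (pminus m - \<delta>) * real n})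
       \<le> (C * phi m ^ m) * (t powr (\<delta> / 2)) ^ n * real (NN m n)"
  proof
    fix n
    have "real (card {i\<in>{1..NN m n}. real (cnt Minus (svec m n i)) \<le> (pminus m - \<delta>) * real n})
        * t powr ((pminus m - \<delta>) * real n) \<le> C * (phi m * t powr ((pminus m - \<delta>) + (\<delta> / 2))) ^ n"
    proof -
      have e: "(pminus m - \<delta>) + (\<delta> / 2) = pminus m - \<delta> / 2" by simp
      show ?thesis unfolding e unfolding C_def x_def[symmetric]
        by (rule chernoff_lo[OF m1 t x ineq[folded x_def]])
    qed
    then show "real (card {i\<in>{1..NN m n}. real (cnt Minus (svec m n i)) \<le> (pminus m - \<delta>) * real n})
       \<le> (C * phi m ^ m) * (t powr (\<delta> / 2)) ^ n * real (NN m n)"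
      by (rule tail_generic) (use t m1 in \<open>auto simp: C_def\<close>)
  qed
  moreover have "t powr (\<delta> / 2) < 1" using t \<delta> powr_less_mono2[of "\<delta>/2" t 1] by auto
  ultimately show ?thesis by (intro exI[of _ "C * phi m ^ m"] exI[of _ "t powr (\<delta> / 2)"]) auto
qed

lemma freq_cnt: "freq s x = real (cnt x s) / real (length s)"
  by (simp add: freq_def cnt_def)

lemma good_index:
  assumes m1: "m \<ge> 1" and \<epsilon>: "0 < \<epsilon>" and n: "n \<ge> 1" and nb: "real (m - 1) / real n \<le> \<epsilon> / 2"
    and i: "1 \<le> i" "i \<le> NN m n"
    and lo: "(pminus m - \<epsilon> / (2 * real m)) * real n < real (cnt Minus (svec m n i))"
    and hi: "real (cnt Minus (svec m n i)) < (pminus m + \<epsilon> / (2 * real m)) * real n"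
  shows "\<bar>freq (svec m n i) Minus - pminus m\<bar> \<le> \<epsilon> \<and>
         \<bar>freq (svec m n i) Plus - pplus m\<bar> \<le> \<epsilon> \<and>
         \<bar>freq (svec m n i) Star - pstar m\<bar> \<le> \<epsilon>"
proof -
  define s where "s = svec m n i"
  define M where "M = real (cnt Minus s)"
  define S where "S = real (cnt Star s)"
  define P where "P = real (cnt Plus s)"
  define p where "p = pminus m"
  define \<delta> where "\<delta> = \<epsilon> / (2 * real m)"
  have npos: "real n > 0" using n by simp
  have mpos: "real m > 0" using m1 by simp
  have md: "real m * \<delta> = \<epsilon> / 2" using mpos by (simp add: \<delta>_def)
  have \<delta>0: "\<delta> > 0" using \<epsilon> mpos by (simp add: \<delta>_def)
  have PMS: "P + M + S = real n" using cnt_total[of s] by (simp add: P_def M_def S_def s_def flip: of_nat_add)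
  have sb1: "S \<le> real (m - 1) * M" and sb2: "real (m - 1) * M - S \<le> real (m - 1)"
    using star_bounds[OF m1 i] by (simp_all add: S_def M_def s_def)
  have m1r: "real (m - 1) = real m - 1" using m1 by (simp add: of_nat_diff)
  define u where "u = M / real n - p"
  define w where "w = (real (m - 1) * M - S) / real n"
  have u: "\<bar>u\<bar> \<le> \<delta>"
  proof -
    have "(p - \<delta>) * real n < M" "M < (p + \<delta>) * real n"
      using lo hi by (simp_all add: M_def p_def \<delta>_def s_def)
    then have "p - \<delta> < M / real n" "M / real n < p + \<delta>"
      using npos by (simp_all add: field_simps)
    then show ?thesis by (simp add: u_def abs_le_iff)
  qed
  have w0: "0 \<le> w" using sb1 npos by (simp add: w_def)
  have w1: "w \<le> \<epsilon> / 2"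
  proof -
    have "w \<le> real (m - 1) / real n" unfolding w_def using sb2 npos by (intro divide_right_mono) auto
    then show ?thesis using nb by linarith
  qed
  have mu: "\<bar>real m * u\<bar> \<le> \<epsilon> / 2"
    using mult_left_mono[OF u, of "real m"] mpos md by (simp add: abs_mult)
  have m1u: "\<bar>(real m - 1) * u\<bar> \<le> \<epsilon> / 2"
  proof -
    have "\<bar>(real m - 1) * u\<bar> = (real m - 1) * \<bar>u\<bar>" using m1 by (simp add: abs_mult)
    also have "\<dots> \<le> real m * \<bar>u\<bar>" by (simp add: algebra_simps)
    also have "\<dots> \<le> \<epsilon> / 2" using mu mpos by (simp add: abs_mult)
    finally show ?thesis .
  qed
  have fM: "freq s Minus = M / real n" by (simp add: freq_cnt M_def s_def)
  have fS: "freq s Star = S / real n" by (simp add: freq_cnt S_def s_def)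
  have fP: "freq s Plus = P / real n" by (simp add: freq_cnt P_def s_def)
  have e1: "freq s Minus - pminus m = u" by (simp add: fM u_def p_def)
  have e2: "freq s Star - pstar m = (real m - 1) * u - w"
    using npos unfolding fS pstar_def u_def w_def p_def m1r by (simp add: field_simps)
  have e3: "freq s Plus - pplus m = - (real m * u) + w"
  proof -
    have Peq: "P = real n - M - S" using PMS by simp
    show ?thesis
      using npos unfolding fP Peq pplus_def u_def w_def p_def m1r by (simp add: field_simps)
  qed
  have "\<delta> \<le> \<epsilon>" using \<epsilon> m1 by (simp add: \<delta>_def field_simps)
  moreover have "real m * u \<le> \<epsilon> / 2" "- (real m * u) \<le> \<epsilon> / 2" using mu unfolding abs_le_iff by auto
  moreover have "(real m - 1) * u \<le> \<epsilon> / 2" "- ((real m - 1) * u) \<le> \<epsilon> / 2" using m1u unfolding abs_le_iff by auto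
  moreover have "u \<le> \<delta>" "- u \<le> \<delta>" using u unfolding abs_le_iff by auto
  ultimately show ?thesis unfolding s_def[symmetric] e1 e2 e3 abs_le_iff using w0 w1 by linarith
qed

theorem theorem2:
  fixes m :: nat and \<epsilon> :: real
  assumes "m \<ge> 1" and "0 < \<epsilon>" and "\<epsilon> < 1"
  shows "(\<lambda>n. real (card {s \<in> SS m n.
              \<bar>freq s Minus - pminus m\<bar> \<le> \<epsilon> \<and>
              \<bar>freq s Plus - pplus m\<bar> \<le> \<epsilon> \<and>
              \<bar>freq s Star - pstar m\<bar> \<le> \<epsilon>}) / real (NN m n))
         \<longlonglongrightarrow> 1"
proof -
  have m1: "m \<ge> 1" and \<epsilon>: "0 < \<epsilon>" using assms by auto
  define good where "good s \<longleftrightarrow> \<bar>freq s Minus - pminus m\<bar> \<le> \<epsilon> \<and>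
              \<bar>freq s Plus - pplus m\<bar> \<le> \<epsilon> \<and> \<bar>freq s Star - pstar m\<bar> \<le> \<epsilon>" for s
  define G where "G n = {s \<in> SS m n. good s}" for n
  define F where "F n = real (card (G n)) / real (NN m n)" for n
  define \<delta> where "\<delta> = \<epsilon> / (2 * real m)"
  have \<delta>: "\<delta> > 0" using \<epsilon> m1 by (simp add: \<delta>_def)
  obtain K1 r1 where r1: "0 \<le> r1" "r1 < 1" and K1: "\<And>n. real (card {i\<in>{1..NN m n}.
      real (cnt Minus (svec m n i)) \<ge> (pminus m + \<delta>) * real n}) \<le> K1 * r1 ^ n * real (NN m n)"
    using tail_hi[OF m1 \<delta>] by blast
  obtain K2 r2 where r2: "0 \<le> r2" "r2 < 1" and K2: "\<And>n. real (card {i\<in>{1..NN m n}.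
      real (cnt Minus (svec m n i)) \<le> (pminus m - \<delta>) * real n}) \<le> K2 * r2 ^ n * real (NN m n)"
    using tail_lo[OF m1 \<delta>] by blast
  define L where "L n = 1 - (K1 * r1 ^ n + K2 * r2 ^ n)" for n
  define n0 where "n0 = nat \<lceil>2 * real (m - 1) / \<epsilon>\<rceil> + 1"
  have Npos: "real (NN m n) > 0" for n using NN_pos[of m n] by simp
  have finG: "finite (G n)" for n unfolding G_def SS_def by simp
  have upper: "F n \<le> 1" for n
  proof -
    have "card (G n) \<le> card (SS m n)" unfolding G_def by (rule card_mono) (auto simp: SS_def)
    also have "\<dots> \<le> card {1..NN m n}" unfolding SS_def by (rule card_image_le) simp
    finally have "real (card (G n)) \<le> real (NN m n)" by simp
    then show ?thesis using Npos[of n] by (simp add: F_def)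
  qed
  have lower: "L n \<le> F n" if n0n: "n \<ge> n0" for n
  proof -
    have n1: "n \<ge> 1" using n0n by (simp add: n0_def)
    have "2 * real (m - 1) / \<epsilon> \<le> real n"
      using n0n unfolding n0_def by linarith
    then have "2 * real (m - 1) \<le> real n * \<epsilon>" using \<epsilon> by (simp add: field_simps)
    then have nb: "real (m - 1) / real n \<le> \<epsilon> / 2" using n1 by (simp add: field_simps)
    define I where "I = {1..NN m n}"
    define Bh where "Bh = {i\<in>I. real (cnt Minus (svec m n i)) \<ge> (pminus m + \<delta>) * real n}"
    define Bl where "Bl = {i\<in>I. real (cnt Minus (svec m n i)) \<le> (pminus m - \<delta>) * real n}"
    have sub: "svec m n ` (I - (Bh \<union> Bl)) \<subseteq> G n"
    proof
      fix s assume "s \<in> svec m n ` (I - (Bh \<union> Bl))"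
      then obtain i where i: "i \<in> I" "i \<notin> Bh" "i \<notin> Bl" and s: "s = svec m n i" by auto
      have "good s" unfolding s good_def
        by (rule good_index[OF m1 \<epsilon> n1 nb]) (use i in \<open>auto simp: I_def Bh_def Bl_def \<delta>_def\<close>)
      moreover have "s \<in> SS m n" using i s by (auto simp: SS_def I_def)
      ultimately show "s \<in> G n" by (simp add: G_def)
    qed
    have inj: "inj_on (svec m n) (I - (Bh \<union> Bl))"
      by (rule inj_on_subset[OF svec_inj[OF m1]]) (auto simp: I_def)
    have "card (I - (Bh \<union> Bl)) \<le> card (G n)"
      using card_mono[OF finG sub] card_image[OF inj] by simp
    moreover have "card (I - (Bh \<union> Bl)) = card I - card (Bh \<union> Bl)"
      by (rule card_Diff_subset) (auto simp: Bh_def Bl_def I_def)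
    moreover have "card (Bh \<union> Bl) \<le> card I" by (rule card_mono) (auto simp: Bh_def Bl_def I_def)
    moreover have "card (Bh \<union> Bl) \<le> card Bh + card Bl" by (rule card_Un_le)
    ultimately have "real (card I) - real (card Bh) - real (card Bl) \<le> real (card (G n))"
      by linarith
    moreover have "real (card Bh) \<le> K1 * r1 ^ n * real (NN m n)" using K1[of n] by (simp add: Bh_def I_def)
    moreover have "real (card Bl) \<le> K2 * r2 ^ n * real (NN m n)" using K2[of n] by (simp add: Bl_def I_def)
    moreover have "card I = NN m n" by (simp add: I_def)
    ultimately have "L n * real (NN m n) \<le> real (card (G n))" by (simp add: L_def algebra_simps)
    then show ?thesis using Npos[of n] by (simp add: F_def field_simps)
  qed
  have l1: "(\<lambda>n. r1 ^ n) \<longlonglongrightarrow> 0" by (rule LIMSEQ_power_zero) (use r1 in simp)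
  have l2: "(\<lambda>n. r2 ^ n) \<longlonglongrightarrow> 0" by (rule LIMSEQ_power_zero) (use r2 in simp)
  have "L \<longlonglongrightarrow> 1 - (K1 * 0 + K2 * 0)" unfolding L_def
    by (intro tendsto_diff tendsto_const tendsto_add tendsto_mult l1 l2)
  then have Llim: "L \<longlonglongrightarrow> 1" by simp
  have "F \<longlonglongrightarrow> 1"
  proof (rule tendsto_sandwich[OF _ _ Llim tendsto_const])
    show "\<forall>\<^sub>F n in sequentially. L n \<le> F n" using lower by (auto simp: eventually_sequentially)
    show "\<forall>\<^sub>F n in sequentially. F n \<le> 1" using upper by simp
  qed
  then show ?thesis unfolding F_def G_def good_def .
qed

end
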